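(* Let $n\ge 3$ and consider the representations $\zeta'_i:\mathrm{TVB}_n\to\mathrm{GL}_{n+1}(\mathbb{C})$, $1\le i\le 7$, given by $\zeta'_i(\sigma_k)=L_k(S)$, $\zeta'_i(\rho_k)=L_k(R)$ ($1\le k\le n-1$), $\zeta'_i(\gamma_j)=L_j(G)$ ($1\le j\le n$), where: (1) $\zeta'_1$: $S=\begin{pmatrix}0&b\\ c&0\end{pmatrix}$, $R=\begin{pmatrix}0&-\frac{\sqrt b}{\sqrt c}\\ -\frac{\sqrt c}{\sqrt b}&0\end{pmatrix}$, $G=\mathrm{diag}(-1,1)$; (2) $\zeta'_2$: $S=\begin{pmatrix}0&b\\ c&0\end{pmatrix}$, $R=\begin{pmatrix}0&\frac{\sqrt b}{\sqrt c}\\ \frac{\sqrt c}{\sqrt b}&0\end{pmatrix}$, $G=\mathrm{diag}(-1,1)$; (3) $\zeta'_3$: $S,R$ as in (1), $G=I_2$; (4) $\zeta'_4$: $S,R$ as in (2), $G=I_2$; (5) $\zeta'_5$: $S=I_2$, $R=\begin{pmatrix}0&x\\ \frac1x&0\end{pmatrix}$, $G=\mathrm{diag}(-1,1)$; (6) $\zeta'_6$: $S=I_2$, $R=\begin{pmatrix}0&x\\ \frac1x&0\end{pmatrix}$, $G=I_2$; (7) $\zeta'_7$: $S=R=G=I_2$; with $b,c,x\in\mathbb{C}\setminus\{0\}$ and $\sqrt b,\sqrt c$ square roots of $b,c$. Then every $\zeta'_i$ is reducible to degree $n$: the line spanned by the last standard basis vector $e_{n+1}$ is invariant under all $\zeta'_i(g)$,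 and the subspace $\mathrm{span}(e_1,\dots,e_n)$ is invariant as well. Furthermore, for $1\le i\le 4$, if $bc\neq 1$ then the $n$-dimensional subrepresentation of $\zeta'_i$ on $\mathrm{span}(e_1,\dots,e_n)$ is irreducible (i.e. $\zeta'_i$ is not further reducible).
   Context: For $n\ge 2$, the twisted virtual braid group $\mathrm{TVB}_n$ is the group with generators $\sigma_1,\dots,\sigma_{n-1}$, $\rho_1,\dots,\rho_{n-1}$, $\gamma_1,\dots,\gamma_n$ and defining relations: $\sigma_i\sigma_{i+1}\sigma_i=\sigma_{i+1}\sigma_i\sigma_{i+1}$; $\sigma_i\sigma_j=\sigma_j\sigma_i$ ($|i-j|\ge2$); $\rho_i^2=1$; $\rho_i\rho_j=\rho_j\rho_i$ ($|i-j|\ge 2$); $\rho_i\rho_{i+1}\rho_i=\rho_{i+1}\rho_i\rho_{i+1}$; $\sigma_i\rho_j=\rho_j\sigma_i$ ($|i-j|\ge 2$); $\rho_i\rho_{i+1}\sigma_i=\sigma_{i+1}\rho_i\rho_{i+1}$; $\gamma_i^2=1$; $\gamma_i\gamma_j=\gamma_j\gamma_i$; $\gamma_j\rho_i=\rho_i\gamma_j$ and $\gamma_j\sigma_i=\sigma_i\gamma_j$ ($|i-j|\ge 2$); $\rho_i\gamma_i=\gamma_{i+1}\rho_i$; $\rho_i\sigma_i\rho_i=\gamma_{i+1}\gamma_i\sigma_i\gamma_i\gamma_{i+1}$. For a $2\times2$ matrix $M$ and $1\le i\le n$, $L_i(M)$ denotes the $(n+1)\times(n+1)$ block-diagonal matrix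 $\mathrm{diag}(I_{i-1},M,I_{n-i})$. A representation on $V$ is irreducible if $V$ has no nonzero proper subspace invariant under all the representing matrices. *)

theory Defs
  imports "Jordan_Normal_Form.Matrix"
begin

(* L n i M = diag(I_{i-1}, M, I_{n-i}) as an (n+1)x(n+1) matrix; i is 1-based (1 <= i <= n),
   so the 2x2 block sits at 0-based rows/columns i-1 and i. *)
definition Lmat :: "nat \<Rightarrow> nat \<Rightarrow> complex mat \<Rightarrow> complex mat" where
  "Lmat n i M = mat (n+1) (n+1) (\<lambda>(r,c).
     if i - 1 \<le> r \<and> r \<le> i \<and> i - 1 \<le> c \<and> c \<le> i
     then M $$ (r - (i - 1), c - (i - 1))
     else if r = c then 1 else 0)"

definition mat2 :: "complex \<Rightarrow> complex \<Rightarrow> complex \<Rightarrow> complex \<Rightarrow> complex mat" where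
  "mat2 a b c d = mat 2 2 (\<lambda>(r,s). if r = 0 then (if s = 0 then a else b)
                                        else (if s = 0 then c else d))"

definition S_blk :: "nat \<Rightarrow> complex \<Rightarrow> complex \<Rightarrow> complex mat" where
  "S_blk i b c = (if i \<le> 4 then mat2 0 b c 0 else 1\<^sub>m 2)"

definition R_blk :: "nat \<Rightarrow> complex \<Rightarrow> complex \<Rightarrow> complex \<Rightarrow> complex mat" where
  "R_blk i sb sc x =
     (if i = 1 \<or> i = 3 then mat2 0 (- (sb / sc)) (- (sc / sb)) 0
      else if i = 2 \<or> i = 4 then mat2 0 (sb / sc) (sc / sb) 0
      else if i = 5 \<or> i = 6 then mat2 0 x (1 / x) 0
      else 1\<^sub>m 2)"

definition G_blk :: "nat \<Rightarrow> complex mat" where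
  "G_blk i = (if i = 1 \<or> i = 2 \<or> i = 5 then mat2 (-1) 0 0 1 else 1\<^sub>m 2)"

definition zeta_gens :: "nat \<Rightarrow> nat \<Rightarrow> complex \<Rightarrow> complex \<Rightarrow> complex \<Rightarrow> complex \<Rightarrow> complex
                          \<Rightarrow> complex mat set" where
  "zeta_gens n i b c sb sc x =
     {Lmat n k (S_blk i b c) | k. 1 \<le> k \<and> k \<le> n - 1}
   \<union> {Lmat n k (R_blk i sb sc x) | k. 1 \<le> k \<and> k \<le> n - 1}
   \<union> {Lmat n j (G_blk i) | j. 1 \<le> j \<and> j \<le> n}"

(* subgroup of GL_N(C) generated by a set of matrices: the image zeta(TVB_n) *)
inductive_set gen_group :: "nat \<Rightarrow> complex mat set \<Rightarrow> complex mat set"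
  for N :: nat and A :: "complex mat set" where
  one: "1\<^sub>m N \<in> gen_group N A"
| gen: "M \<in> A \<Longrightarrow> M \<in> gen_group N A"
| mult: "M \<in> gen_group N A \<Longrightarrow> M' \<in> gen_group N A \<Longrightarrow> M * M' \<in> gen_group N A"
| inv: "M \<in> gen_group N A \<Longrightarrow> M' \<in> carrier_mat N N \<Longrightarrow> M * M' = 1\<^sub>m N
          \<Longrightarrow> M' \<in> gen_group N A"

definition zeta_image :: "nat \<Rightarrow> nat \<Rightarrow> complex \<Rightarrow> complex \<Rightarrow> complex \<Rightarrow> complex \<Rightarrow> complex
                          \<Rightarrow> complex mat set" where
  "zeta_image n i b c sb sc x = gen_group (n+1) (zeta_gens n i b c sb sc x)"

definition is_subspace :: "nat \<Rightarrow> complex vec set \<Rightarrow> bool" where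
  "is_subspace N W \<longleftrightarrow> W \<subseteq> carrier_vec N \<and> 0\<^sub>v N \<in> W \<and>
     (\<forall>u\<in>W. \<forall>v\<in>W. u + v \<in> W) \<and> (\<forall>a. \<forall>v\<in>W. a \<cdot>\<^sub>v v \<in> W)"

definition invariant_under :: "complex mat set \<Rightarrow> complex vec set \<Rightarrow> bool" where
  "invariant_under Ms W \<longleftrightarrow> (\<forall>M\<in>Ms. \<forall>v\<in>W. M *\<^sub>v v \<in> W)"

(* line spanned by e_{n+1} (0-based index n) in C^{n+1} *)
definition last_line :: "nat \<Rightarrow> complex vec set" where
  "last_line n = {a \<cdot>\<^sub>v unit_vec (n+1) n | a. True}"

definition first_span :: "nat \<Rightarrow> complex vec set" where
  "first_span n = {v \<in> carrier_vec (n+1). v $ n = 0}"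

definition irreducible_on :: "nat \<Rightarrow> complex mat set \<Rightarrow> complex vec set \<Rightarrow> bool" where
  "irreducible_on N Ms V \<longleftrightarrow>
     (\<forall>W. is_subspace N W \<and> W \<subseteq> V \<and> invariant_under Ms W \<longrightarrow> W = {0\<^sub>v N} \<or> W = V)"

end

theory Submission imports Defs "Jordan_Normal_Form.Determinant" begin

lemma Lmat_carrier[simp]: "Lmat n k M \<in> carrier_mat (n+1) (n+1)"
  "dim_row (Lmat n k M) = n+1" "dim_col (Lmat n k M) = n+1"
  by (auto simp: Lmat_def)

lemma Lmat_apply:
  assumes "1 \<le> k" "k \<le> n" "v \<in> carrier_vec (n+1)" "r < n+1"
  shows "(Lmat n k M *\<^sub>v v) $ r =
    (if r = k-1 then M$$(0,0) * v$(k-1) + M$$(0,1) * v$k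
     else if r = k then M$$(1,0) * v$(k-1) + M$$(1,1) * v$k else v$r)"
proof -
  have dv: "dim_vec v = n+1" using assms by auto
  have "(Lmat n k M *\<^sub>v v) $ r = (\<Sum>i\<in>{0..<n+1}. Lmat n k M $$ (r,i) * v$i)"
    using assms by (simp add: scalar_prod_def dv)
  also have "\<dots> = (\<Sum>i\<in>{0..<n+1}.
      (if i = k-1 then (if r = k-1 then M$$(0,0) * v$(k-1) else if r = k then M$$(1,0) * v$(k-1) else if r = k - 1 then v$r else 0) else 0)
    + (if i = k then (if r = k-1 then M$$(0,1) * v$k else if r = k then M$$(1,1) * v$k else if r = k then v$r else 0) else 0)
    + (if i = r \<and> r \<noteq> k-1 \<and> r \<noteq> k then v$r else 0))"
    apply (rule sum.cong[OF refl])
    using assms by (auto simp: Lmat_def)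
  also have "\<dots> = (if r = k-1 then M$$(0,0) * v$(k-1) + M$$(0,1) * v$k
     else if r = k then M$$(1,0) * v$(k-1) + M$$(1,1) * v$k else v$r)"
    using assms by (simp add: sum.distrib)
  finally show ?thesis .
qed

definition blk :: "nat \<Rightarrow> complex mat \<Rightarrow> bool" where
  "blk n M \<longleftrightarrow> M \<in> carrier_mat (n+1) (n+1) \<and> (\<forall>r<n. M$$(n,r) = 0 \<and> M$$(r,n) = 0)"

lemma blk_Lmat:
  assumes "1 \<le> k" "k \<le> n" "k = n \<Longrightarrow> M$$(1,0) = 0 \<and> M$$(0,1) = 0"
  shows "blk n (Lmat n k M)"
  using assms unfolding blk_def by (auto simp: Lmat_def)

lemma blk_mult:
  assumes "blk n A" "blk n B" shows "blk n (A * B)"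
proof -
  have c: "A \<in> carrier_mat (n+1) (n+1)" "B \<in> carrier_mat (n+1) (n+1)" using assms blk_def by auto
  have "(A*B) $$ (n,r) = 0 \<and> (A*B) $$ (r,n) = 0" if "r < n" for r
  proof -
    have "(A*B) $$ (n,r) = (\<Sum>i\<in>{0..<n+1}. A$$(n,i) * B$$(i,r))"
      using c that by (simp add: scalar_prod_def)
    also have "\<dots> = 0" apply (rule sum.neutral) using assms that unfolding blk_def
      by (metis atLeastLessThan_iff less_Suc_eq mult_eq_0_iff Suc_eq_plus1)
    finally have 1: "(A*B) $$ (n,r) = 0" .
    have "(A*B) $$ (r,n) = (\<Sum>i\<in>{0..<n+1}. A$$(r,i) * B$$(i,n))"
      using c that by (simp add: scalar_prod_def)
    also have "\<dots> = 0" apply (rule sum.neutral) using assms that unfolding blk_def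
      by (metis atLeastLessThan_iff less_Suc_eq mult_eq_0_iff Suc_eq_plus1)
    finally show ?thesis using 1 by simp
  qed
  then show ?thesis using c unfolding blk_def by auto
qed

lemma blk_inv:
  assumes "blk n A" "B \<in> carrier_mat (n+1) (n+1)" "A * B = 1\<^sub>m (n+1)" shows "blk n B"
proof -
  have c: "A \<in> carrier_mat (n+1) (n+1)" using assms blk_def by auto
  have BA: "B * A = 1\<^sub>m (n+1)" using mat_mult_left_right_inverse[OF c assms(2,3)] .
  have row: "(A*B) $$ (n,j) = A$$(n,n) * B$$(n,j)" if "j < n+1" for j
  proof -
    have "(A*B) $$ (n,j) = (\<Sum>i\<in>{0..<n+1}. A$$(n,i) * B$$(i,j))"
      using c assms(2) that by (simp add: scalar_prod_def)
    also have "\<dots> = (\<Sum>i\<in>{0..<n+1}. if i = n then A$$(n,n) * B$$(n,j) else 0)"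
      apply (rule sum.cong[OF refl]) using assms(1) unfolding blk_def by auto
    also have "\<dots> = A$$(n,n) * B$$(n,j)" by simp
    finally show ?thesis .
  qed
  have col: "(B*A) $$ (j,n) = B$$(j,n) * A$$(n,n)" if "j < n+1" for j
  proof -
    have "(B*A) $$ (j,n) = (\<Sum>i\<in>{0..<n+1}. B$$(j,i) * A$$(i,n))"
      using c assms(2) that by (simp add: scalar_prod_def)
    also have "\<dots> = (\<Sum>i\<in>{0..<n+1}. if i = n then B$$(j,n) * A$$(n,n) else 0)"
      apply (rule sum.cong[OF refl]) using assms(1) unfolding blk_def by auto
    also have "\<dots> = B$$(j,n) * A$$(n,n)" by simp
    finally show ?thesis .
  qed
  have "A$$(n,n) * B$$(n,n) = 1" using row[of n] assms(3) by simp
  hence nz: "A$$(n,n) \<noteq> 0" by auto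
  have "B$$(n,r) = 0 \<and> B$$(r,n) = 0" if "r < n" for r
  proof -
    have "A$$(n,n) * B$$(n,r) = 0" using row[of r] assms(3) that by simp
    moreover have "B$$(r,n) * A$$(n,n) = 0" using col[of r] BA that by simp
    ultimately show ?thesis using nz by simp
  qed
  then show ?thesis using assms(2) unfolding blk_def by auto
qed

lemma blk_last_line: assumes "blk n M" "w \<in> last_line n" shows "M *\<^sub>v w \<in> last_line n"
proof -
  obtain a where w: "w = a \<cdot>\<^sub>v unit_vec (n+1) n" using assms(2) unfolding last_line_def by auto
  have c: "M \<in> carrier_mat (n+1) (n+1)" using assms blk_def by auto
  have "M *\<^sub>v w = (a * M$$(n,n)) \<cdot>\<^sub>v unit_vec (n+1) n"
  proof (rule eq_vecI)
    fix i assume i: "i < dim_vec ((a * M$$(n,n)) \<cdot>\<^sub>v unit_vec (n+1) n)"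
    have "(M *\<^sub>v w) $ i = (\<Sum>j\<in>{0..<n+1}. M$$(i,j) * (if j = n then a else 0))"
      using i c unfolding w by (auto simp: scalar_prod_def intro!: sum.cong)
    also have "\<dots> = M$$(i,n) * a" by (simp add: if_distrib cong: if_cong)
    finally show "(M *\<^sub>v w) $ i = ((a * M$$(n,n)) \<cdot>\<^sub>v unit_vec (n+1) n) $ i"
      using i assms(1) unfolding blk_def by auto
  qed (use c in auto)
  then show ?thesis unfolding last_line_def by auto
qed

lemma blk_first_span: assumes "blk n M" "w \<in> first_span n" shows "M *\<^sub>v w \<in> first_span n"
proof -
  have c: "M \<in> carrier_mat (n+1) (n+1)" using assms blk_def by auto
  have w: "w \<in> carrier_vec (n+1)" "w $ n = 0" using assms(2) unfolding first_span_def by auto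
  have "(M *\<^sub>v w) $ n = (\<Sum>j\<in>{0..<n+1}. M$$(n,j) * w$j)"
    using c w by (auto simp: scalar_prod_def)
  also have "\<dots> = 0" apply (rule sum.neutral) using assms(1) w unfolding blk_def
    by (metis atLeastLessThan_iff less_Suc_eq mult_eq_0_iff Suc_eq_plus1)
  moreover have "M *\<^sub>v w \<in> carrier_vec (n+1)" using c w(1) by simp
  ultimately show ?thesis unfolding first_span_def by auto
qed

lemma mat2_idx[simp]: "mat2 a b c d $$ (0,0) = a" "mat2 a b c d $$ (0,1) = b"
  "mat2 a b c d $$ (1,0) = c" "mat2 a b c d $$ (1,1) = d"
  "mat2 a b c d $$ (0,Suc 0) = b"
  "mat2 a b c d $$ (Suc 0,0) = c" "mat2 a b c d $$ (Suc 0,Suc 0) = d"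
  by (auto simp: mat2_def)

lemma blk_group:
  assumes "M \<in> gen_group (n+1) (zeta_gens n i b c sb sc x)" "n \<ge> 1"
  shows "blk n M"
  using assms(1)
proof induction
  case one
  then show ?case unfolding blk_def by auto
next
  case (gen M)
  have G: "G_blk i $$ (1,0) = 0 \<and> G_blk i $$ (0,1) = 0" by (auto simp: G_blk_def)
  from gen show ?case unfolding zeta_gens_def using assms(2) G
    by (auto intro!: blk_Lmat)
next
  case (mult M M')
  then show ?case using blk_mult by blast
next
  case (inv M M')
  then show ?case using blk_inv by blast
qed

lemma idx_sub: "(u::complex vec) \<in> carrier_vec N \<Longrightarrow> w \<in> carrier_vec N \<Longrightarrow> r < N \<Longrightarrow>
  (u + (-1) \<cdot>\<^sub>v w) $ r = u$r - w$r"
  by simp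

lemma irr:
  assumes n3: "n \<ge> 3" and b: "b \<noteq> 0" and c: "c \<noteq> 0" and bc: "b*c \<noteq> 1"
    and sub: "is_subspace (n+1) W" and WV: "W \<subseteq> first_span n"
    and inv: "\<And>k v. 1 \<le> k \<Longrightarrow> k \<le> n-1 \<Longrightarrow> v \<in> W \<Longrightarrow> Lmat n k (mat2 0 b c 0) *\<^sub>v v \<in> W"
  shows "W = {0\<^sub>v (n+1)} \<or> W = first_span n"
proof -
  define A where "A k = Lmat n k (mat2 0 b c 0)" for k
  have add: "u \<in> W \<Longrightarrow> v \<in> W \<Longrightarrow> u + v \<in> W" for u v using sub unfolding is_subspace_def by auto
  have smul: "v \<in> W \<Longrightarrow> a \<cdot>\<^sub>v v \<in> W" for a v using sub unfolding is_subspace_def by auto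
  have zero: "0\<^sub>v (n+1) \<in> W" using sub unfolding is_subspace_def by auto
  have Wc: "v \<in> W \<Longrightarrow> v \<in> carrier_vec (n+1)" for v using sub unfolding is_subspace_def by auto
  have AW: "1 \<le> k \<Longrightarrow> k \<le> n-1 \<Longrightarrow> v \<in> W \<Longrightarrow> A k *\<^sub>v v \<in> W" for k v using inv A_def by simp
  have Ac: "A k *\<^sub>v v \<in> carrier_vec (n+1)" for k v unfolding A_def
    by (metis Lmat_carrier(1) carrier_vecI dim_mult_mat_vec carrier_matD(1))
  have Aapp: "(A k *\<^sub>v v) $ r = (if r = k-1 then b * v$k else if r = k then c * v$(k-1) else v$r)"
    if "1 \<le> k" "k \<le> n-1" "v \<in> carrier_vec (n+1)" "r < n+1" for k v r
    using Lmat_apply[of k n v r "mat2 0 b c 0"] that unfolding A_def by auto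
  define P where "P k v = (1/(b*c-1)) \<cdot>\<^sub>v (A k *\<^sub>v (A k *\<^sub>v v) + (-1) \<cdot>\<^sub>v v)" for k v
  have PW: "1 \<le> k \<Longrightarrow> k \<le> n-1 \<Longrightarrow> v \<in> W \<Longrightarrow> P k v \<in> W" for k v
    unfolding P_def by (intro smul add AW) auto
  have Pc: "v \<in> carrier_vec (n+1) \<Longrightarrow> P k v \<in> carrier_vec (n+1)" for k v
    unfolding P_def using Ac by simp
  have bc1: "b*c - 1 \<noteq> 0" using bc by simp
  have Papp: "P k v $ r = (if r = k-1 \<or> r = k then v$r else 0)"
    if "1 \<le> k" "k \<le> n-1" "v \<in> carrier_vec (n+1)" "r < n+1" for k v r
  proof -
    have d: "dim_vec v = n+1" "dim_vec (A k *\<^sub>v (A k *\<^sub>v v)) = n+1" using that by (auto simp: A_def)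
    have "P k v $ r = (1/(b*c-1)) * ((A k *\<^sub>v (A k *\<^sub>v v)) $ r - v $ r)"
      unfolding P_def using d that by simp
    also have "\<dots> = (if r = k-1 \<or> r = k then v$r else 0)"
      using that Aapp[OF that(1,2) Ac that(4)] Aapp[OF that(1,2,3)] Aapp[OF that(1,2,3), of k] Aapp[OF that(1,2,3), of "k-1"] bc1
      by (auto simp: field_simps)
    finally show ?thesis .
  qed
  let ?e = "\<lambda>j. unit_vec (n+1) j"
  have E: "(v$j) \<cdot>\<^sub>v ?e j \<in> W" if v: "v \<in> W" and j: "j < n" for v j
  proof -
    have vc: "v \<in> carrier_vec (n+1)" using Wc v by auto
    consider "j = 0" | "1 \<le> j" "j \<le> n-2" | "j = n-1" using j by linarith
    then show ?thesis
    proof cases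
      case 1
      have "P 1 v + (-1) \<cdot>\<^sub>v P 2 (P 1 v) \<in> W" using n3 v by (intro add smul PW) auto
      moreover have "P 1 v + (-1) \<cdot>\<^sub>v P 2 (P 1 v) = (v$j) \<cdot>\<^sub>v ?e j"
      proof (rule eq_vecI)
        fix r assume "r < dim_vec ((v$j) \<cdot>\<^sub>v ?e j)"
        then have r: "r < n+1" by simp
        show "(P 1 v + (-1) \<cdot>\<^sub>v P 2 (P 1 v)) $ r = ((v$j) \<cdot>\<^sub>v ?e j) $ r"
          using r 1 n3 vc Pc[OF vc] Pc[OF Pc[OF vc]] Papp[OF _ _ vc r, of 1] Papp[OF _ _ Pc[OF vc] r, of 2]
            idx_sub[OF Pc[OF vc] Pc[OF Pc[OF vc]] r, of 1 2 1]
          by auto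
      qed (use Pc vc in auto)
      ultimately show ?thesis by simp
    next
      case 2
      have "P j (P (j+1) v) \<in> W" using n3 v 2 by (intro PW) auto
      moreover have "P j (P (j+1) v) = (v$j) \<cdot>\<^sub>v ?e j"
      proof (rule eq_vecI)
        fix r assume "r < dim_vec ((v$j) \<cdot>\<^sub>v ?e j)"
        then have r: "r < n+1" by simp
        show "P j (P (j+1) v) $ r = ((v$j) \<cdot>\<^sub>v ?e j) $ r"
          using r 2 n3 vc Papp[OF _ _ vc r, of "j+1"] Papp[OF _ _ Pc[OF vc] r, of j] j
          by auto
      qed (use Pc vc in auto)
      ultimately show ?thesis by simp
    next
      case 3
      have "P (n-1) v + (-1) \<cdot>\<^sub>v P (n-2) (P (n-1) v) \<in> W" using n3 v by (intro add smul PW) auto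
      moreover have "P (n-1) v + (-1) \<cdot>\<^sub>v P (n-2) (P (n-1) v) = (v$j) \<cdot>\<^sub>v ?e j"
      proof (rule eq_vecI)
        fix r assume "r < dim_vec ((v$j) \<cdot>\<^sub>v ?e j)"
        then have r: "r < n+1" by simp
        show "(P (n-1) v + (-1) \<cdot>\<^sub>v P (n-2) (P (n-1) v)) $ r = ((v$j) \<cdot>\<^sub>v ?e j) $ r"
          using r 3 n3 vc Pc[OF vc] Pc[OF Pc[OF vc]] Papp[OF _ _ vc r, of "n-1"] Papp[OF _ _ Pc[OF vc] r, of "n-2"]
            idx_sub[OF Pc[OF vc] Pc[OF Pc[OF vc]] r, of "n-1" "n-2" "n-1"]
          by auto
      qed (use Pc vc in auto)
      ultimately show ?thesis by simp
    qed
  qed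
  have up: "?e (j+1) \<in> W" if "j+1 < n" "?e j \<in> W" for j
  proof -
    have "(1/c) \<cdot>\<^sub>v (A (j+1) *\<^sub>v ?e j) \<in> W" using that by (intro smul AW) auto
    moreover have "(1/c) \<cdot>\<^sub>v (A (j+1) *\<^sub>v ?e j) = ?e (j+1)"
    proof (rule eq_vecI)
      fix r assume "r < dim_vec (?e (j+1))"
      then have r: "r < n+1" by simp
      show "((1/c) \<cdot>\<^sub>v (A (j+1) *\<^sub>v ?e j)) $ r = ?e (j+1) $ r"
        using r that c Aapp[of "j+1" "?e j" r] by (auto simp: A_def)
    qed (auto simp: A_def)
    ultimately show ?thesis by simp
  qed
  have down: "?e (j-1) \<in> W" if "1 \<le> j" "j < n" "?e j \<in> W" for j
  proof -
    have "(1/b) \<cdot>\<^sub>v (A j *\<^sub>v ?e j) \<in> W" using that by (intro smul AW) auto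
    moreover have "(1/b) \<cdot>\<^sub>v (A j *\<^sub>v ?e j) = ?e (j-1)"
    proof (rule eq_vecI)
      fix r assume "r < dim_vec (?e (j-1))"
      then have r: "r < n+1" by simp
      show "((1/b) \<cdot>\<^sub>v (A j *\<^sub>v ?e j)) $ r = ?e (j-1) $ r"
        using r that b Aapp[of j "?e j" r] by (auto simp: A_def)
    qed (auto simp: A_def)
    ultimately show ?thesis by simp
  qed
  have alle: "?e m \<in> W" if j: "j < n" "?e j \<in> W" and m: "m < n" for j m
  proof -
    have u: "\<forall>d. j + d < n \<longrightarrow> ?e (j+d) \<in> W"
    proof
      fix d show "j + d < n \<longrightarrow> ?e (j+d) \<in> W"
      proof (induction d)
        case 0 show ?case using j(2) by simp
      next
        case (Suc d)
        show ?case
        proof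
          assume a: "j + Suc d < n"
          then have "?e (j+d) \<in> W" using Suc by simp
          then have "?e (j+d+1) \<in> W" using up[of "j+d"] a by simp
          then show "?e (j + Suc d) \<in> W" by simp
        qed
      qed
    qed
    have dn: "\<forall>d. d \<le> j \<longrightarrow> ?e (j-d) \<in> W"
    proof
      fix d show "d \<le> j \<longrightarrow> ?e (j-d) \<in> W"
      proof (induction d)
        case 0 show ?case using j(2) by simp
      next
        case (Suc d)
        show ?case
        proof
          assume a: "Suc d \<le> j"
          then have "?e (j-d) \<in> W" using Suc by simp
          then have "?e (j-d-1) \<in> W" using down[of "j-d"] a j(1) by simp
          moreover have "j - d - 1 = j - Suc d" by simp
          ultimately show "?e (j - Suc d) \<in> W" by metis
        qed
      qed
    qed
    show ?thesis
    proof (cases "j \<le> m")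
      case True then show ?thesis using u[rule_format, of "m-j"] m by auto
    next
      case False then show ?thesis using dn[rule_format, of "j-m"] by auto
    qed
  qed
  show ?thesis
  proof (cases "\<exists>v\<in>W. v \<noteq> 0\<^sub>v (n+1)")
    case False
    then have "W = {0\<^sub>v (n+1)}" using zero by blast
    then show ?thesis by (rule disjI1)
  next
    case True
    then obtain v where v: "v \<in> W" "v \<noteq> 0\<^sub>v (n+1)" by blast
    have "v \<in> first_span n" using v WV by blast
    then have vc: "v \<in> carrier_vec (n+1)" "v $ n = 0" unfolding first_span_def by simp_all
    obtain j where j: "j < n" "v $ j \<noteq> 0"
    proof (rule ccontr)
      assume "\<not> thesis"
      then have "\<forall>j<n. v$j = 0" using that by auto
      have "v = 0\<^sub>v (n+1)"
      proof (rule eq_vecI)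
        fix i assume "i < dim_vec (0\<^sub>v (n+1) :: complex vec)"
        then have i: "i < n \<or> i = n" by auto
        show "v $ i = 0\<^sub>v (n+1) $ i" using i vc \<open>\<forall>j<n. v$j = 0\<close> by auto
      qed (use vc in simp)
      then show False using v by simp
    qed
    have "(1 / v$j) \<cdot>\<^sub>v ((v$j) \<cdot>\<^sub>v ?e j) \<in> W" by (rule smul[OF E[OF v(1) j(1)]])
    then have ej: "?e j \<in> W" using j by (simp add: smult_smult_assoc)
    have all: "?e m \<in> W" if "m < n" for m using alle[OF j(1) ej that] .
    have "w \<in> W" if w: "w \<in> first_span n" for w
    proof -
      have wc: "w \<in> carrier_vec (n+1)" "w $ n = 0" using w unfolding first_span_def by simp_all
      have "m \<le> n \<longrightarrow> vec (n+1) (\<lambda>r. if r < m then w$r else 0) \<in> W" for m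
      proof (induction m)
        case 0
        have "vec (n+1) (\<lambda>r. if r < 0 then w$r else 0) = 0\<^sub>v (n+1)" by auto
        then show ?case using zero by simp
      next
        case (Suc m)
        show ?case
        proof
          assume sm: "Suc m \<le> n"
          have eq: "vec (n+1) (\<lambda>r. if r < Suc m then w$r else 0) =
              vec (n+1) (\<lambda>r. if r < m then w$r else 0) + (w$m) \<cdot>\<^sub>v ?e m"
            by (rule eq_vecI) (use sm less_antisym in fastforce)+
          have "vec (n+1) (\<lambda>r. if r < m then w$r else 0) \<in> W" using Suc sm by simp
          moreover have "(w$m) \<cdot>\<^sub>v ?e m \<in> W" using all sm by (intro smul) simp
          ultimately show "vec (n+1) (\<lambda>r. if r < Suc m then w$r else 0) \<in> W"
            unfolding eq by (rule add)
        qed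
      qed
      then have "vec (n+1) (\<lambda>r. if r < n then w$r else 0) \<in> W" by simp
      moreover have "vec (n+1) (\<lambda>r. if r < n then w$r else 0) = w"
      proof (rule eq_vecI)
        fix i assume "i < dim_vec w"
        then have i: "i < n \<or> i = n" using wc by auto
        show "vec (n+1) (\<lambda>r. if r < n then w$r else 0) $ i = w $ i" using i wc by auto
      qed (use wc in simp)
      ultimately show ?thesis by simp
    qed
    then have "first_span n \<subseteq> W" by blast
    then show ?thesis using WV by blast
  qed
qed

theorem theorem3p7:
  fixes n :: nat and b c x sb sc :: complex
  assumes "n \<ge> 3" and "b \<noteq> 0" and "c \<noteq> 0" and "x \<noteq> 0"
    and "sb ^ 2 = b" and "sc ^ 2 = c"
  shows "(\<forall>i\<in>{1..7}.
            invariant_under (zeta_image n i b c sb sc x) (last_line n) \<and>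
            invariant_under (zeta_image n i b c sb sc x) (first_span n))
       \<and> (b * c \<noteq> 1 \<longrightarrow>
            (\<forall>i\<in>{1..4}. irreducible_on (n+1) (zeta_image n i b c sb sc x) (first_span n)))"
proof (intro conjI ballI impI)
  fix i
  have n1: "n \<ge> 1" using assms(1) by simp
  show "invariant_under (zeta_image n i b c sb sc x) (last_line n)"
    unfolding invariant_under_def zeta_image_def
    using blk_group[OF _ n1] blk_last_line by blast
  show "invariant_under (zeta_image n i b c sb sc x) (first_span n)"
    unfolding invariant_under_def zeta_image_def
    using blk_group[OF _ n1] blk_first_span by blast
next
  fix i :: nat
  assume bc: "b * c \<noteq> 1" and i: "i \<in> {1..4}"
  have S: "S_blk i b c = mat2 0 b c 0" using i by (simp add: S_blk_def)
  show "irreducible_on (n+1) (zeta_image n i b c sb sc x) (first_span n)"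
    unfolding irreducible_on_def
  proof (intro allI impI)
    fix W assume W: "is_subspace (n+1) W \<and> W \<subseteq> first_span n \<and>
        invariant_under (zeta_image n i b c sb sc x) W"
    have "Lmat n k (mat2 0 b c 0) *\<^sub>v v \<in> W"
      if "1 \<le> k" "k \<le> n-1" "v \<in> W" for k v
    proof -
      have "Lmat n k (mat2 0 b c 0) \<in> zeta_gens n i b c sb sc x"
        unfolding zeta_gens_def S[symmetric] using that by blast
      then have "Lmat n k (mat2 0 b c 0) \<in> zeta_image n i b c sb sc x"
        unfolding zeta_image_def by (rule gen_group.gen)
      then show ?thesis using W that(3) unfolding invariant_under_def by blast
    qed
    then show "W = {0\<^sub>v (n+1)} \<or> W = first_span n"
      using irr[OF assms(1-3) bc] W by blast
  qed
qed

end
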